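(* Let $\mathcal{F}$ be a regular facets-pairing structure on $\mathcal{C}^n$. Then for every proper face $f$ of $\mathcal{C}^n$ of codimension $s$, the face family $\widehat f$ contains at most $2^s$ faces. Consequently $\widehat f$ has the maximal possible number $2^s$ of elements exactly when it is a perfect face family.
   Context: Let $[\pm n]=\{\pm1,\dots,\pm n\}$ and $\mathcal{C}^n=\{x\in\mathbb{R}^n: -\tfrac14\le x_i\le\tfrac14\}$. For $1\le i\le n$, $\mathbf{F}(i)$ and $\mathbf{F}(-i)$ denote the facets of $\mathcal{C}^n$ in $\{x_i=\tfrac14\}$ and $\{x_i=-\tfrac14\}$; for $j_1,\dots,j_s\in[\pm n]$ with distinct absolute values, $\mathbf{F}(j_1,\dots,j_s)=\bigcap_i\mathbf{F}(j_i)$. A signed permutation is a bijection $\sigma$ of $[\pm n]$ with $\sigma(-k)=-\sigma(k)$. A facets-pairing structure on $\mathcal{C}^n$ is a pair $(\omega,\{\tau_j\})$ where $\omega$ is a bijection of $[\pm n]$ with $\omega\circ\omega=\mathrm{id}$ and $\tau_j:\mathbf{F}(j)\to\mathbf{F}(\omega(j))$ are face-preserving homeomorphisms with $\tau_{\omega(j)}=\tau_j^{-1}$, such that for all $|j|\ne|k|$, writing $\tau_j(\mathbf{F}(j,k))=\mathbf{F}(\omega(j),k')$ and $\tau_k(\mathbf{F}(j,k))=\mathbf{F}(j',\omega(k))$, one has $\tau_{k'}\tau_j(p)=\tau_{j'}\tau_k(p)$ for all $p\in\mathbf{F}(j,k)$. It is regular if each $\tau_j$ is a Euclidean isometry and $\omega$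 is a signed permutation. A composition $\tau_{k_m}\circ\dots\circ\tau_{k_1}(f)$ applied to a proper face $f$ is valid if $f\subset\mathbf{F}(k_1)$ and $\tau_{k_i}\circ\dots\circ\tau_{k_1}(f)\subset\mathbf{F}(k_{i+1})$ for $1\le i<m$ ($m=0$ allowed, giving $f$). The face family $\widehat f$ is the set of all faces of this valid form. A face family $\widehat f$ with $f$ of codimension $s$ is perfect if it has exactly $2^s$ elements. *)

theory Defs
  imports "HOL-Analysis.Analysis"
begin

text \<open>Signed indices [+-n] are modelled as pairs (i, b) with i :: 'n an index
  of the finite type 'n (n = CARD('n)) and b the sign: (i, True) stands for +i,
  (i, False) for -i.\<close>

type_synonym 'n sidx = "'n \<times> bool"

definition sneg :: "'n sidx \<Rightarrow> 'n sidx" where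
  "sneg j = (fst j, \<not> snd j)"

definition cube :: "(real ^ 'n) set" where
  "cube = {x. \<forall>i. - (1/4) \<le> x $ i \<and> x $ i \<le> 1/4}"

definition sval :: "bool \<Rightarrow> real" where
  "sval b = (if b then 1/4 else - (1/4))"

definition facet :: "'n sidx \<Rightarrow> (real ^ 'n::finite) set" where
  "facet j = {x \<in> cube. x $ fst j = sval (snd j)}"

definition distinct_abs :: "'n sidx set \<Rightarrow> bool" where
  "distinct_abs J \<longleftrightarrow> inj_on fst J"

definition faceF :: "'n sidx set \<Rightarrow> (real ^ 'n::finite) set" where
  "faceF J = cube \<inter> (\<Inter>j\<in>J. facet j)"

definition proper_face :: "(real ^ 'n::finite) set \<Rightarrow> bool" where
  "proper_face g \<longleftrightarrow> (\<exists>J. J \<noteq> {} \<and> distinct_abs J \<and> g = faceF J)"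

definition face_preserving ::
  "(real ^ 'n::finite) set \<Rightarrow> (real ^ 'n \<Rightarrow> real ^ 'n) \<Rightarrow> bool" where
  "face_preserving S h \<longleftrightarrow>
     (\<forall>g. proper_face g \<and> g \<subseteq> S \<longrightarrow> proper_face (h ` g))"

definition facets_pairing ::
  "('n::finite sidx \<Rightarrow> 'n sidx) \<Rightarrow> ('n sidx \<Rightarrow> real ^ 'n \<Rightarrow> real ^ 'n) \<Rightarrow> bool" where
  "facets_pairing \<omega> \<tau> \<longleftrightarrow>
     bij \<omega> \<and> (\<forall>j. \<omega> (\<omega> j) = j) \<and>
     (\<forall>j. homeomorphism (facet j) (facet (\<omega> j)) (\<tau> j) (\<tau> (\<omega> j))) \<and>
     (\<forall>j. face_preserving (facet j) (\<tau> j)) \<and>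
     (\<forall>j k j' k'. fst j \<noteq> fst k \<longrightarrow>
        fst k' \<noteq> fst (\<omega> j) \<longrightarrow> fst j' \<noteq> fst (\<omega> k) \<longrightarrow>
        \<tau> j ` faceF {j, k} = faceF {\<omega> j, k'} \<longrightarrow>
        \<tau> k ` faceF {j, k} = faceF {j', \<omega> k} \<longrightarrow>
        (\<forall>p \<in> faceF {j, k}. \<tau> k' (\<tau> j p) = \<tau> j' (\<tau> k p)))"

definition signed_perm :: "('n sidx \<Rightarrow> 'n sidx) \<Rightarrow> bool" where
  "signed_perm \<omega> \<longleftrightarrow> bij \<omega> \<and> (\<forall>k. \<omega> (sneg k) = sneg (\<omega> k))"

definition regular_facets_pairing ::
  "('n::finite sidx \<Rightarrow> 'n sidx) \<Rightarrow> ('n sidx \<Rightarrow> real ^ 'n \<Rightarrow> real ^ 'n) \<Rightarrow> bool" where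
  "regular_facets_pairing \<omega> \<tau> \<longleftrightarrow>
     facets_pairing \<omega> \<tau> \<and> signed_perm \<omega> \<and>
     (\<forall>j. \<forall>p \<in> facet j. \<forall>q \<in> facet j. dist (\<tau> j p) (\<tau> j q) = dist p q)"

text \<open>Valid compositions: the list [k_1, ..., k_m] encodes tau_{k_m} o ... o tau_{k_1}.\<close>
fun valid_comp ::
  "('n::finite sidx \<Rightarrow> real ^ 'n \<Rightarrow> real ^ 'n) \<Rightarrow> 'n sidx list \<Rightarrow> (real ^ 'n) set \<Rightarrow> bool" where
  "valid_comp \<tau> [] f = True"
| "valid_comp \<tau> (k # ks) f = (f \<subseteq> facet k \<and> valid_comp \<tau> ks (\<tau> k ` f))"

fun apply_comp ::
  "('n sidx \<Rightarrow> real ^ 'n \<Rightarrow> real ^ 'n) \<Rightarrow> 'n sidx list \<Rightarrow> (real ^ 'n) set \<Rightarrow> (real ^ 'n) set" where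
  "apply_comp \<tau> [] f = f"
| "apply_comp \<tau> (k # ks) f = apply_comp \<tau> ks (\<tau> k ` f)"

definition face_family ::
  "('n::finite sidx \<Rightarrow> real ^ 'n \<Rightarrow> real ^ 'n) \<Rightarrow> (real ^ 'n) set \<Rightarrow> (real ^ 'n) set set" where
  "face_family \<tau> f = {apply_comp \<tau> ks f | ks. valid_comp \<tau> ks f}"

definition perfect_family ::
  "('n::finite sidx \<Rightarrow> real ^ 'n \<Rightarrow> real ^ 'n) \<Rightarrow> 'n sidx set \<Rightarrow> bool" where
  "perfect_family \<tau> J \<longleftrightarrow> card (face_family \<tau> (faceF J)) = 2 ^ card J"

end

theory Submission
  imports Defs
begin


definition ports :: "(real ^ 'n::finite) set \<Rightarrow> 'n sidx set" where
  "ports g = {k. g \<subseteq> facet k}"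

definition pt :: "'n sidx set \<Rightarrow> ('n \<Rightarrow> real) \<Rightarrow> real ^ 'n::finite" where
  "pt K c = (\<chi> i. if (i,True) \<in> K then 1/4 else if (i,False) \<in> K then - (1/4) else c i)"

lemma faceF_mem: "x \<in> faceF K \<longleftrightarrow> x \<in> cube \<and> (\<forall>j\<in>K. x $ fst j = sval (snd j))"
  by (auto simp: faceF_def facet_def)

lemma pt_in:
  assumes "distinct_abs K" "\<And>i. \<bar>c i\<bar> \<le> 1/4"
  shows "pt K c \<in> faceF K"
proof -
  have b: "- (1/4) \<le> c i \<and> c i \<le> 1/4" for i using assms(2)[of i] by linarith
  have "pt K c \<in> cube" using b by (auto simp: pt_def cube_def)
  moreover have "pt K c $ fst j = sval (snd j)" if "j \<in> K" for j
  proof (cases j)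
    case (Pair i b)
    show ?thesis
    proof (cases b)
      case True then show ?thesis using that Pair by (simp add: pt_def sval_def)
    next
      case False
      have "(i,True) \<notin> K"
      proof
        assume a: "(i,True) \<in> K"
        have "(i,True) = j" using inj_onD[OF assms(1)[unfolded distinct_abs_def] _ a that] Pair by simp
        with Pair False show False by simp
      qed
      then show ?thesis using that Pair False by (simp add: pt_def sval_def)
    qed
  qed
  ultimately show ?thesis by (simp add: faceF_mem)
qed

lemma faceF_ne: "distinct_abs K \<Longrightarrow> faceF K \<noteq> {}"
  using pt_in[of K "\<lambda>_. 0"] by auto

lemma ports_faceF:
  fixes K :: "'n::finite sidx set"
  assumes "distinct_abs K"
  shows "ports (faceF K) = K"
proof
  show "K \<subseteq> ports (faceF K)" by (auto simp: ports_def faceF_def)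
next
  show "ports (faceF K) \<subseteq> K"
  proof
    fix k assume "k \<in> ports (faceF K)"
    hence sub: "faceF K \<subseteq> facet k" by (simp add: ports_def)
    obtain i b where k: "k = (i,b)" by (cases k)
    define c where "c = (\<lambda>_::'n. - sval b)"
    have "\<bar>c i'\<bar> \<le> 1/4" for i' by (simp add: c_def sval_def)
    hence "pt K c \<in> faceF K" using pt_in assms by blast
    hence "pt K c $ i = sval b" using sub k by (auto simp: facet_def)
    hence e: "(if (i,True) \<in> K then 1/4 else if (i,False) \<in> K then - (1/4) else - sval b) = sval b"
      by (simp add: pt_def c_def)
    show "k \<in> K"
    proof (cases b)
      case True
      then show ?thesis using e k by (auto simp: sval_def split: if_splits)
    next
      case False
      then show ?thesis using e k by (auto simp: sval_def split: if_splits)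
    qed
  qed
qed

lemma faceF_inj:
  assumes "distinct_abs K" "distinct_abs K'" "faceF K = faceF K'"
  shows "K = K'"
  using ports_faceF assms by metis

definition DP :: "(real ^ 'n::finite) set \<Rightarrow> real \<Rightarrow> bool" where
  "DP S r \<longleftrightarrow> (\<exists>x\<in>S. \<exists>y\<in>S. dist x y = r) \<and> (\<forall>x\<in>S. \<forall>y\<in>S. dist x y \<le> r)"

lemma DP_unique: "DP S r \<Longrightarrow> DP S r' \<Longrightarrow> r = r'"
  unfolding DP_def by (metis order.antisym)

lemma DP_iso:
  assumes "DP S r" "\<forall>p\<in>T. \<forall>q\<in>T. dist (h p) (h q) = dist p q" "S \<subseteq> T"
  shows "DP (h ` S) r"
proof -
  obtain x y where xy: "x \<in> S" "y \<in> S" "dist x y = r" "\<forall>x\<in>S. \<forall>y\<in>S. dist x y \<le> r"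
    using assms(1) unfolding DP_def by blast
  have "dist (h x) (h y) = r" using xy assms(2,3) by (metis subsetD)
  moreover have "\<forall>a\<in>h ` S. \<forall>b\<in>h ` S. dist a b \<le> r" using xy assms(2,3) by (auto, metis subsetD)
  ultimately show ?thesis unfolding DP_def using xy by blast
qed

lemma dist_vec_sq: "dist (x::real^'n::finite) y = sqrt (\<Sum>i\<in>UNIV. (x$i - y$i)^2)"
  by (simp add: dist_vec_def L2_set_def dist_real_def)

lemma DP_faceF:
  fixes K :: "'n::finite sidx set"
  assumes "distinct_abs K"
  shows "DP (faceF K) (sqrt (real (card (- (fst ` K)))) / 2)"
proof -
  let ?A = "fst ` K"
  have fx: "x $ i = y $ i" if "x \<in> faceF K" "y \<in> faceF K" "i \<in> ?A" for x y i
    using that by (auto simp: faceF_mem) (metis fst_conv snd_conv)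
  have sumeq: "(\<Sum>i\<in>UNIV. f i) = (\<Sum>i\<in>-?A. f i)" if "\<And>i. i \<in> ?A \<Longrightarrow> f i = 0" for f :: "'n \<Rightarrow> real"
    by (rule sum.mono_neutral_right) (auto simp: that)
  have up: "dist x y \<le> sqrt (real (card (- ?A))) / 2" if "x \<in> faceF K" "y \<in> faceF K" for x y
  proof -
    have "(\<Sum>i\<in>UNIV. (x$i - y$i)^2) = (\<Sum>i\<in>-?A. (x$i - y$i)^2)"
      by (rule sumeq) (simp add: fx[OF that])
    also have "\<dots> \<le> (\<Sum>i\<in>-?A. 1/4)"
    proof (rule sum_mono)
      fix i
      have "x \<in> cube" "y \<in> cube" using that by (auto simp: faceF_mem)
      hence a: "-(1/4) \<le> x$i \<and> x$i \<le> 1/4" "-(1/4) \<le> y$i \<and> y$i \<le> 1/4" by (auto simp: cube_def)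
      hence "\<bar>x$i - y$i\<bar> \<le> 1/2" unfolding abs_le_iff by linarith
      hence "(x$i - y$i)^2 \<le> (1/2)^2" by (metis abs_le_square_iff abs_numeral abs_divide abs_one)
      thus "(x$i - y$i)^2 \<le> 1/4" by (simp add: power_divide)
    qed
    also have "\<dots> = real (card (-?A)) / 4" by simp
    finally have "dist x y \<le> sqrt (real (card (-?A)) / 4)"
      by (simp add: dist_vec_sq)
    also have "\<dots> = sqrt (real (card (- ?A))) / 2" by (simp add: real_sqrt_divide)
    finally show ?thesis .
  qed
  define x where "x = pt K (\<lambda>_. 1/4)"
  define y where "y = pt K (\<lambda>_. -1/4)"
  have xi: "x \<in> faceF K" "y \<in> faceF K" using pt_in[OF assms] by (auto simp: x_def y_def)
  have "(\<Sum>i\<in>UNIV. (x$i - y$i)^2) = (\<Sum>i\<in>-?A. (x$i - y$i)^2)"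
    by (rule sumeq) (simp add: fx[OF xi])
  also have "\<dots> = (\<Sum>i\<in>-?A. 1/4)"
  proof (rule sum.cong)
    fix i assume "i \<in> -?A"
    hence "(i,True) \<notin> K" "(i,False) \<notin> K" by (auto simp: image_iff)
    thus "(x$i - y$i)^2 = 1/4" by (simp add: x_def y_def pt_def power2_eq_square)
  qed simp
  finally have ss: "(\<Sum>i\<in>UNIV. (x$i - y$i)^2) = real (card (- ?A)) / 4" by simp
  have "dist x y = sqrt (real (card (- ?A)) / 4)" by (simp only: dist_vec_sq ss)
  also have "\<dots> = sqrt (real (card (- ?A))) / 2" by (simp add: real_sqrt_divide)
  finally have "dist x y = sqrt (real (card (- ?A))) / 2" .
  with xi up show ?thesis unfolding DP_def by blast
qed

lemma card_eq_from_DP: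
  fixes K K' :: "'a::finite sidx set"
  assumes "distinct_abs K" "distinct_abs K'" "DP (faceF K') (sqrt (real (card (- (fst ` K)))) / 2)"
  shows "card K' = card K"
proof -
  have "sqrt (real (card (- (fst ` K)))) = sqrt (real (card (- (fst ` K'))))"
    using DP_unique[OF assms(3) DP_faceF[OF assms(2)]] by simp
  hence "card (- (fst ` K)) = card (- (fst ` K'))" by simp
  hence "card (fst ` K) = card (fst ` K')"
  proof -
    have c: "card (- A) = card (UNIV::'a set) - card A" for A :: "'a set"
      by (simp add: Compl_eq_Diff_UNIV card_Diff_subset)
    have "card (fst ` K) \<le> card (UNIV::'a set)" "card (fst ` K') \<le> card (UNIV::'a set)"
      by (auto intro!: card_mono)
    thus ?thesis using \<open>card (- (fst ` K)) = card (- (fst ` K'))\<close> c by simp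
  qed
  thus ?thesis using assms(1,2) by (simp add: distinct_abs_def card_image)
qed



lemma valid_comp_append:
  "valid_comp \<tau> (ks @ [k]) f \<longleftrightarrow> valid_comp \<tau> ks f \<and> apply_comp \<tau> ks f \<subseteq> facet k"
  by (induction ks arbitrary: f) auto

lemma apply_comp_append:
  "apply_comp \<tau> (ks @ [k]) f = \<tau> k ` apply_comp \<tau> ks f"
  by (induction ks arbitrary: f) auto

lemma faceF_sub_cube: "faceF K \<subseteq> cube" by (simp add: faceF_def)

lemma faceF_two: "faceF {r, p} = cube \<inter> facet r \<inter> facet p"
  by (auto simp: faceF_def)

lemma choose_step: "Suc d * (s choose Suc d) = (s - d) * (s choose d)"
proof (cases s)
  case 0 then show ?thesis by simp
next
  case (Suc m)
  have "Suc d * (Suc m choose Suc d) = Suc m * (m choose d)" by (rule Suc_times_binomial)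
  moreover have "(Suc m - d) * (Suc m choose d) = Suc m * ((Suc m - 1) choose d)"
    by (rule binomial_absorb_comp)
  ultimately show ?thesis using Suc by simp
qed

locale rfp =
  fixes \<omega> :: "'n::finite sidx \<Rightarrow> 'n sidx"
    and \<tau> :: "'n sidx \<Rightarrow> real ^ 'n \<Rightarrow> real ^ 'n"
  assumes reg: "regular_facets_pairing \<omega> \<tau>"
begin

lemma reg_parts:
  "\<forall>j. \<omega> (\<omega> j) = j"
  "\<forall>j. homeomorphism (facet j) (facet (\<omega> j)) (\<tau> j) (\<tau> (\<omega> j))"
  "\<forall>j. face_preserving (facet j) (\<tau> j)"
  "\<forall>j. \<forall>p \<in> facet j. \<forall>q \<in> facet j. dist (\<tau> j p) (\<tau> j q) = dist p q"
  using reg unfolding regular_facets_pairing_def facets_pairing_def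
  apply -
  apply (elim conjE, assumption)+
  done

lemma om2: "\<omega> (\<omega> j) = j"
  using reg_parts(1) by blast

lemma homeo: "homeomorphism (facet j) (facet (\<omega> j)) (\<tau> j) (\<tau> (\<omega> j))"
  using reg_parts(2) by blast

lemma fp: "face_preserving (facet j) (\<tau> j)"
  using reg_parts(3) by blast

lemma iso: "\<forall>p \<in> facet j. \<forall>q \<in> facet j. dist (\<tau> j p) (\<tau> j q) = dist p q"
  using reg_parts(4) by blast

lemma cocycle:
  assumes "fst j \<noteq> fst k" "fst k' \<noteq> fst (\<omega> j)" "fst j' \<noteq> fst (\<omega> k)"
    "\<tau> j ` faceF {j, k} = faceF {\<omega> j, k'}" "\<tau> k ` faceF {j, k} = faceF {j', \<omega> k}"
    "p \<in> faceF {j, k}"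
  shows "\<tau> k' (\<tau> j p) = \<tau> j' (\<tau> k p)"
proof -
  have "\<forall>j k j' k'. fst j \<noteq> fst k \<longrightarrow>
        fst k' \<noteq> fst (\<omega> j) \<longrightarrow> fst j' \<noteq> fst (\<omega> k) \<longrightarrow>
        \<tau> j ` faceF {j, k} = faceF {\<omega> j, k'} \<longrightarrow>
        \<tau> k ` faceF {j, k} = faceF {j', \<omega> k} \<longrightarrow>
        (\<forall>p \<in> faceF {j, k}. \<tau> k' (\<tau> j p) = \<tau> j' (\<tau> k p))"
    using reg unfolding regular_facets_pairing_def facets_pairing_def by (elim conjE)
  then show ?thesis using assms by blast
qed

lemma tau_back: assumes "h \<subseteq> facet k" shows "\<tau> (\<omega> k) ` (\<tau> k ` h) = h"
proof -
  have a: "\<And>x. x \<in> h \<Longrightarrow> \<tau> (\<omega> k) (\<tau> k x) = x"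
    using assms homeomorphism_apply1[OF homeo[of k]] by blast
  have "\<tau> (\<omega> k) ` (\<tau> k ` h) = (\<lambda>x. \<tau> (\<omega> k) (\<tau> k x)) ` h" by (simp add: image_image)
  also have "\<dots> = (\<lambda>x. x) ` h" by (rule image_cong) (auto simp: a)
  finally show ?thesis by simp
qed

lemma into: "h \<subseteq> facet k \<Longrightarrow> \<tau> k ` h \<subseteq> facet (\<omega> k)"
  using homeomorphism_image1[OF homeo, of k] by blast

lemma inj_tau: "inj_on (\<tau> k) (facet k)"
  using homeomorphism_apply1[OF homeo, of _ k] by (metis inj_on_inverseI)

lemma image_face:
  assumes "distinct_abs K" "K \<noteq> {}" "faceF K \<subseteq> facet p"
  shows "\<exists>K'. distinct_abs K' \<and> K' \<noteq> {} \<and> \<tau> p ` faceF K = faceF K' \<and> card K' = card K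
           \<and> \<omega> p \<in> K'"
proof -
  have "proper_face (faceF K)" using assms by (auto simp: proper_face_def)
  hence "proper_face (\<tau> p ` faceF K)" using fp assms(3) by (auto simp: face_preserving_def)
  then obtain K' where K': "K' \<noteq> {}" "distinct_abs K'" "\<tau> p ` faceF K = faceF K'"
    by (auto simp: proper_face_def)
  have "DP (\<tau> p ` faceF K) (sqrt (real (card (- (fst ` K)))) / 2)"
    by (rule DP_iso[OF DP_faceF[OF assms(1)] iso assms(3)])
  hence c: "card K' = card K" using card_eq_from_DP[OF assms(1) K'(2)] K'(3) by simp
  have "faceF K' \<subseteq> facet (\<omega> p)" using into[OF assms(3)] K'(3) by simp
  hence "\<omega> p \<in> K'" using ports_faceF[OF K'(2)] by (auto simp: ports_def)
  with K' c show ?thesis by blast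
qed

lemma codim2:
  assumes "fst r \<noteq> fst p"
  shows "\<exists>j'. fst j' \<noteq> fst (\<omega> p) \<and> \<tau> p ` faceF {r, p} = faceF {j', \<omega> p}"
proof -
  have da: "distinct_abs {r, p}" using assms by (auto simp: distinct_abs_def)
  have rp: "r \<noteq> p" using assms by auto
  have sub: "faceF {r,p} \<subseteq> facet p" by (auto simp: faceF_def)
  have c2: "card {r,p} = 2" using rp by simp
  have ne: "{r,p} \<noteq> {}" by simp
  from image_face[OF da ne sub] obtain K' where K': "distinct_abs K'" "\<tau> p ` faceF {r,p} = faceF K'" "card K' = card {r,p}" "\<omega> p \<in> K'"
    by auto
  note K' = K'(1,2) K'(3)[unfolded c2] K'(4)
  obtain x y where xy: "K' = {x, y}" "x \<noteq> y" using K'(3) unfolding card_2_iff by (elim exE conjE) simp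
  obtain j' where jK: "K' = {\<omega> p, j'}" "j' \<noteq> \<omega> p"
  proof (cases "x = \<omega> p")
    case True then show ?thesis using that[of y] xy by simp
  next
    case False then have "y = \<omega> p" using K'(4) xy by simp
    then show ?thesis using that[of x] xy by (simp add: insert_commute)
  qed
  moreover have "fst j' \<noteq> fst (\<omega> p)"
  proof
    assume "fst j' = fst (\<omega> p)"
    moreover have "j' \<in> K'" "\<omega> p \<in> K'" using jK by auto
    ultimately have "j' = \<omega> p" using K'(1) unfolding distinct_abs_def by (meson inj_onD)
    with \<open>j' \<noteq> \<omega> p\<close> show False by simp
  qed
  ultimately have "fst j' \<noteq> fst (\<omega> p) \<and> \<tau> p ` faceF {r, p} = faceF {j', \<omega> p}"
    using K'(2) by (simp add: insert_commute)
  then show ?thesis by blast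
qed


lemma valid_face:
  assumes "valid_comp \<tau> ks (faceF K0)" "distinct_abs K0" "K0 \<noteq> {}"
  shows "\<exists>K. distinct_abs K \<and> K \<noteq> {} \<and> apply_comp \<tau> ks (faceF K0) = faceF K \<and> card K = card K0"
  using assms
proof (induction ks arbitrary: K0)
  case Nil then show ?case by auto
next
  case (Cons k ks)
  then have sub: "faceF K0 \<subseteq> facet k" and v: "valid_comp \<tau> ks (\<tau> k ` faceF K0)" by auto
  from image_face[OF Cons.prems(2,3) sub] obtain K1 where
    K1: "distinct_abs K1" "K1 \<noteq> {}" "\<tau> k ` faceF K0 = faceF K1" "card K1 = card K0" by blast
  from Cons.IH[of K1] v K1 obtain K where "distinct_abs K" "K \<noteq> {}"
    "apply_comp \<tau> ks (faceF K1) = faceF K" "card K = card K1" by auto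
  then show ?case using K1 by auto
qed

end

definition lev :: "('n::finite sidx \<Rightarrow> real ^ 'n \<Rightarrow> real ^ 'n) \<Rightarrow> (real ^ 'n) set \<Rightarrow> (real ^ 'n) set \<Rightarrow> nat" where
  "lev \<tau> f h = (LEAST m. \<exists>ks. length ks = m \<and> valid_comp \<tau> ks f \<and> apply_comp \<tau> ks f = h)"

context rfp
begin

context
  fixes J :: "'n sidx set"
  assumes J: "J \<noteq> {}" "distinct_abs J"
begin

abbreviation "Fam \<equiv> face_family \<tau> (faceF J)"
abbreviation "L h \<equiv> lev \<tau> (faceF J) h"
definition "down h = {k \<in> ports h. L (\<tau> k ` h) < L h}"
definition "up h = {k \<in> ports h. L h < L (\<tau> k ` h)}"
definition "N d = {h \<in> Fam. L h = d}"

lemma fam_iff: "h \<in> Fam \<longleftrightarrow> (\<exists>ks. valid_comp \<tau> ks (faceF J) \<and> apply_comp \<tau> ks (faceF J) = h)"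
  by (auto simp: face_family_def)

lemma fam_face: "h \<in> Fam \<Longrightarrow> \<exists>K. distinct_abs K \<and> K \<noteq> {} \<and> h = faceF K \<and> card K = card J"
  using valid_face[OF _ J(2) J(1)] by (auto simp: fam_iff)

lemma ports_card: "h \<in> Fam \<Longrightarrow> card (ports h) = card J"
  using fam_face ports_faceF by metis

lemma fam_finite: "finite Fam"
proof -
  have "Fam \<subseteq> faceF ` UNIV" using fam_face by blast
  thus ?thesis by (rule finite_subset) simp
qed

lemma lev_wit: assumes "h \<in> Fam"
  shows "\<exists>ks. length ks = L h \<and> valid_comp \<tau> ks (faceF J) \<and> apply_comp \<tau> ks (faceF J) = h"
proof -
  obtain ks where "valid_comp \<tau> ks (faceF J)" "apply_comp \<tau> ks (faceF J) = h" using assms fam_iff by blast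
  hence "\<exists>m ks. length ks = m \<and> valid_comp \<tau> ks (faceF J) \<and> apply_comp \<tau> ks (faceF J) = h" by blast
  then show ?thesis unfolding lev_def by (rule exE) (rule LeastI_ex, blast)
qed

lemma lev_le: "valid_comp \<tau> ks (faceF J) \<Longrightarrow> L (apply_comp \<tau> ks (faceF J)) \<le> length ks"
  unfolding lev_def by (rule Least_le) blast

lemma move:
  assumes "h \<in> Fam" "k \<in> ports h"
  shows "\<tau> k ` h \<in> Fam" "L (\<tau> k ` h) \<le> Suc (L h)"
proof -
  obtain ks where ks: "length ks = L h" "valid_comp \<tau> ks (faceF J)" "apply_comp \<tau> ks (faceF J) = h"
    using lev_wit[OF assms(1)] by blast
  have v: "valid_comp \<tau> (ks @ [k]) (faceF J)" using ks assms(2) by (simp add: valid_comp_append ports_def)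
  have a: "apply_comp \<tau> (ks @ [k]) (faceF J) = \<tau> k ` h" using ks by (simp add: apply_comp_append)
  show "\<tau> k ` h \<in> Fam" using v a fam_iff by blast
  show "L (\<tau> k ` h) \<le> Suc (L h)" using lev_le[OF v] a ks by simp
qed

lemma move_back:
  assumes "h \<in> Fam" "k \<in> ports h"
  shows "\<omega> k \<in> ports (\<tau> k ` h)" "\<tau> (\<omega> k) ` (\<tau> k ` h) = h"
  using into tau_back assms by (auto simp: ports_def)

lemma key: "h \<in> Fam \<Longrightarrow> L h \<le> card (down h)"
proof -
  have "\<forall>h\<in>Fam. L h = n \<longrightarrow> n \<le> card (down h)" for n
  proof (induction n)
    case 0 then show ?case by simp
  next
    case (Suc n)
    show ?case
    proof (intro ballI impI)
      fix h assume hF: "h \<in> Fam" and Lh: "L h = Suc n"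
      obtain ks where ks: "length ks = Suc n" "valid_comp \<tau> ks (faceF J)" "apply_comp \<tau> ks (faceF J) = h"
        using lev_wit[OF hF] Lh by auto
      obtain ks0 p where kp: "ks = ks0 @ [p]" using ks(1) by (cases ks rule: rev_exhaust) auto
      define h1 where "h1 = apply_comp \<tau> ks0 (faceF J)"
      have v0: "valid_comp \<tau> ks0 (faceF J)" and h1p: "h1 \<subseteq> facet p"
        using ks(2) kp by (auto simp: valid_comp_append h1_def)
      have hh1: "h = \<tau> p ` h1" using ks(3) kp by (simp add: apply_comp_append h1_def)
      have h1F: "h1 \<in> Fam" using v0 fam_iff h1_def by blast
      have pP: "p \<in> ports h1" using h1p by (simp add: ports_def)
      have "L h1 \<le> n" using lev_le[OF v0] ks(1) kp h1_def by simp
      moreover have "L h \<le> Suc (L h1)" using move(2)[OF h1F pP] hh1 by simp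
      ultimately have Lh1: "L h1 = n" using Lh by simp
      have IH: "n \<le> card (down h1)" using Suc.IH h1F Lh1 by blast
      obtain K1 where K1: "distinct_abs K1" "h1 = faceF K1" using fam_face[OF h1F] by blast
      have pK1: "ports h1 = K1" using K1 ports_faceF by simp
      have rprop: "r \<noteq> p \<and> fst r \<noteq> fst p \<and> h1 \<subseteq> faceF {r,p}" if "r \<in> down h1" for r
      proof -
        have rP: "r \<in> ports h1" "L (\<tau> r ` h1) < L h1" using that by (auto simp: down_def)
        have "r \<noteq> p" using rP(2) Lh1 Lh hh1 by auto
        moreover have "fst r \<noteq> fst p"
          using K1(1) rP(1) pP pK1 calculation unfolding distinct_abs_def inj_on_def by blast
        moreover have "h1 \<subseteq> faceF {r,p}"
          using rP(1) pP K1(2) faceF_sub_cube by (auto simp: faceF_two ports_def)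
        ultimately show ?thesis by blast
      qed
      define g where "g r = (SOME j'. fst j' \<noteq> fst (\<omega> p) \<and> \<tau> p ` faceF {r, p} = faceF {j', \<omega> p})" for r
      have gprop: "fst (g r) \<noteq> fst (\<omega> p) \<and> \<tau> p ` faceF {r, p} = faceF {g r, \<omega> p}" if "r \<in> down h1" for r
        unfolding g_def by (rule someI_ex) (rule codim2, use rprop[OF that] in blast)
      have gdown: "g r \<in> down h" if rd: "r \<in> down h1" for r
      proof -
        note rp = rprop[OF rd] and gp = gprop[OF rd]
        have "h \<subseteq> faceF {g r, \<omega> p}" using hh1 rp gp by blast
        hence gP: "g r \<in> ports h" by (auto simp: ports_def faceF_def)
        obtain k' where k': "fst k' \<noteq> fst (\<omega> r)" "\<tau> r ` faceF {p, r} = faceF {k', \<omega> r}"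
          using codim2[of p r] rp by metis
        have e1: "\<tau> r ` faceF {r, p} = faceF {\<omega> r, k'}" using k'(2) by (simp add: insert_commute)
        have cc: "\<tau> k' (\<tau> r x) = \<tau> (g r) (\<tau> p x)" if "x \<in> faceF {r, p}" for x
          using cocycle[OF _ k'(1) _ e1 _ that] rp gp by blast
        have "\<tau> (g r) ` h = (\<lambda>x. \<tau> (g r) (\<tau> p x)) ` h1" using hh1 by (simp add: image_image)
        also have "\<dots> = (\<lambda>x. \<tau> k' (\<tau> r x)) ` h1"
          by (rule image_cong) (use cc rp in auto)
        also have "\<dots> = \<tau> k' ` (\<tau> r ` h1)" by (simp add: image_image)
        finally have e2: "\<tau> (g r) ` h = \<tau> k' ` (\<tau> r ` h1)" .
        have rP: "r \<in> ports h1" "L (\<tau> r ` h1) < n" using rd Lh1 by (auto simp: down_def)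
        have h2F: "\<tau> r ` h1 \<in> Fam" using move(1)[OF h1F rP(1)] .
        have "\<tau> r ` h1 \<subseteq> faceF {k', \<omega> r}" using rp k'(2) by (metis image_mono insert_commute)
        hence "k' \<in> ports (\<tau> r ` h1)" by (auto simp: ports_def faceF_def)
        hence "L (\<tau> k' ` (\<tau> r ` h1)) \<le> Suc (L (\<tau> r ` h1))" using move(2)[OF h2F] by blast
        hence "L (\<tau> (g r) ` h) < L h" using e2 rP(2) Lh by simp
        thus ?thesis using gP by (simp add: down_def)
      qed
      have opd: "\<omega> p \<in> down h"
      proof -
        have "\<omega> p \<in> ports h" "\<tau> (\<omega> p) ` h = h1" using move_back[OF h1F pP] hh1 by auto
        thus ?thesis using Lh1 Lh by (simp add: down_def)
      qed
      have ginj: "inj_on g (down h1)"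
      proof
        fix r1 r2 assume r1: "r1 \<in> down h1" and r2: "r2 \<in> down h1" and e: "g r1 = g r2"
        have "\<tau> p ` faceF {r1, p} = \<tau> p ` faceF {r2, p}" using gprop[OF r1] gprop[OF r2] e by simp
        moreover have "faceF {r1, p} \<subseteq> facet p" "faceF {r2, p} \<subseteq> facet p" by (auto simp: faceF_def)
        ultimately have "faceF {r1, p} = faceF {r2, p}" using inj_tau inj_on_image_eq_iff by metis
        moreover have "distinct_abs {r1, p}" "distinct_abs {r2, p}"
          using rprop[OF r1] rprop[OF r2] by (auto simp: distinct_abs_def)
        ultimately have "{r1, p} = {r2, p}" using faceF_inj by blast
        thus "r1 = r2" using rprop[OF r1] rprop[OF r2] by (metis doubleton_eq_iff)
      qed
      have nin: "\<omega> p \<notin> g ` down h1" using gprop by force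
      have "insert (\<omega> p) (g ` down h1) \<subseteq> down h" using gdown opd by blast
      hence "card (insert (\<omega> p) (g ` down h1)) \<le> card (down h)" by (rule card_mono[rotated]) simp
      moreover have "card (insert (\<omega> p) (g ` down h1)) = Suc (card (down h1))"
        using nin ginj by (simp add: card_image)
      ultimately show "Suc n \<le> card (down h)" using IH by simp
    qed
  qed
  then show "h \<in> Fam \<Longrightarrow> L h \<le> card (down h)" by blast
qed


lemma N0: "N 0 \<subseteq> {faceF J}"
proof
  fix h assume "h \<in> N 0"
  hence "h \<in> Fam" "L h = 0" by (auto simp: N_def)
  then obtain ks where "length ks = 0" "apply_comp \<tau> ks (faceF J) = h" using lev_wit by metis
  thus "h \<in> {faceF J}" by simp
qed

lemma N_finite: "finite (N d)"
  using fam_finite by (simp add: N_def)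

lemma N_step: "Suc d * card (N (Suc d)) \<le> (card J - d) * card (N d)"
proof -
  define P where "P = Sigma (N (Suc d)) down"
  define Q where "Q = Sigma (N d) up"
  have fP: "finite P" "finite Q" using N_finite by (auto simp: P_def Q_def)
  have "card P = (\<Sum>h\<in>N (Suc d). card (down h))" unfolding P_def
    by (rule card_SigmaI) (use N_finite in auto)
  moreover have "(\<Sum>h\<in>N (Suc d). Suc d) \<le> (\<Sum>h\<in>N (Suc d). card (down h))"
  proof (rule sum_mono)
    fix h assume "h \<in> N (Suc d)"
    thus "Suc d \<le> card (down h)" using key[of h] by (simp add: N_def)
  qed
  ultimately have c1: "Suc d * card (N (Suc d)) \<le> card P" by (simp add: mult.commute)
  have "card Q = (\<Sum>h\<in>N d. card (up h))" unfolding Q_def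
    by (rule card_SigmaI) (use N_finite in auto)
  moreover have "(\<Sum>h\<in>N d. card (up h)) \<le> (\<Sum>h\<in>N d. card J - d)"
  proof (rule sum_mono)
    fix h assume "h \<in> N d"
    hence hF: "h \<in> Fam" and Lh: "L h = d" by (auto simp: N_def)
    have "up h \<subseteq> ports h - down h" by (auto simp: up_def down_def)
    hence "card (up h) \<le> card (ports h - down h)" by (rule card_mono[rotated]) simp
    also have "\<dots> = card (ports h) - card (down h)"
      by (rule card_Diff_subset) (auto simp: down_def)
    also have "\<dots> \<le> card J - d" using ports_card[OF hF] key[OF hF] Lh by simp
    finally show "card (up h) \<le> card J - d" .
  qed
  ultimately have c2: "card Q \<le> (card J - d) * card (N d)" by (simp add: mult.commute)
  have "card P \<le> card Q"
  proof (rule card_inj_on_le[where f = "\<lambda>(h, k). (\<tau> k ` h, \<omega> k)"])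
    show "inj_on (\<lambda>(h, k). (\<tau> k ` h, \<omega> k)) P"
    proof (rule inj_onI, clarify)
      fix h1 k1 h2 k2 assume a: "(h1, k1) \<in> P" "(h2, k2) \<in> P" "\<tau> k1 ` h1 = \<tau> k2 ` h2" "\<omega> k1 = \<omega> k2"
      have "k1 = k2" using a(4) om2 by metis
      moreover have "h1 \<subseteq> facet k1" "h2 \<subseteq> facet k2" using a(1,2) by (auto simp: P_def down_def ports_def)
      ultimately show "h1 = h2 \<and> k1 = k2" using tau_back a(3) by metis
    qed
    show "(\<lambda>(h, k). (\<tau> k ` h, \<omega> k)) ` P \<subseteq> Q"
    proof -
      have *: "(\<tau> k ` h, \<omega> k) \<in> Q" if hkP: "(h, k) \<in> P" for h k
      proof -
      from hkP have hF: "h \<in> Fam" and Lh: "L h = Suc d" and kP: "k \<in> ports h" and lt: "L (\<tau> k ` h) < L h"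
        by (auto simp: P_def N_def down_def)
      have F2: "\<tau> k ` h \<in> Fam" using move(1)[OF hF kP] .
      have "L h \<le> Suc (L (\<tau> k ` h))"
        using move(2)[OF F2 move_back(1)[OF hF kP]] move_back(2)[OF hF kP] by simp
      hence L2: "L (\<tau> k ` h) = d" using lt Lh by simp
      have "\<omega> k \<in> up (\<tau> k ` h)" using move_back[OF hF kP] L2 Lh by (simp add: up_def)
      thus "(\<tau> k ` h, \<omega> k) \<in> Q" using F2 L2 by (simp add: Q_def N_def)
      qed
      show ?thesis using * by auto
    qed
  qed (rule fP)
  with c1 c2 show ?thesis by linarith
qed

lemma N_bound: "card (N d) \<le> card J choose d"
proof (induction d)
  case 0
  have "card (N 0) \<le> card {faceF J}" by (rule card_mono) (use N0 in auto)
  then show ?case by simp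
next
  case (Suc d)
  have "Suc d * card (N (Suc d)) \<le> (card J - d) * card (N d)" by (rule N_step)
  also have "\<dots> \<le> (card J - d) * (card J choose d)" using Suc.IH by simp
  also have "\<dots> = Suc d * (card J choose Suc d)" by (rule choose_step[symmetric])
  finally have "Suc d * card (N (Suc d)) \<le> Suc d * (card J choose Suc d)" .
  then show ?case by (rule Suc_mult_le_cancel1[THEN iffD1])
qed

lemma fam_card: "card Fam \<le> 2 ^ card J"
proof -
  have "Fam \<subseteq> (\<Union>d\<in>{..card J}. N d)"
  proof
    fix h assume hF: "h \<in> Fam"
    have "L h \<le> card J"
    proof (rule ccontr)
      assume "\<not> L h \<le> card J"
      hence "card (N (L h)) = 0" using N_bound[of "L h"] by (simp add: binomial_eq_0)
      moreover have "h \<in> N (L h)" using hF by (simp add: N_def)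
      ultimately show False using N_finite by auto
    qed
    thus "h \<in> (\<Union>d\<in>{..card J}. N d)" using hF by (auto simp: N_def)
  qed
  hence "card Fam \<le> card (\<Union>d\<in>{..card J}. N d)" by (rule card_mono[rotated]) (simp add: N_finite)
  also have "\<dots> \<le> (\<Sum>d\<le>card J. card (N d))" by (rule card_UN_le) simp
  also have "\<dots> \<le> (\<Sum>d\<le>card J. card J choose d)" by (rule sum_mono) (rule N_bound)
  also have "\<dots> = 2 ^ card J" by (rule choose_row_sum)
  finally show ?thesis .
qed

end

end


theorem mainTheorem3:
  fixes \<omega> :: "'n::finite sidx \<Rightarrow> 'n sidx"
    and \<tau> :: "'n sidx \<Rightarrow> real ^ 'n \<Rightarrow> real ^ 'n"
    and J :: "'n sidx set"
  assumes "regular_facets_pairing \<omega> \<tau>"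
    and "J \<noteq> {}" and "distinct_abs J"
  shows "finite (face_family \<tau> (faceF J))
      \<and> card (face_family \<tau> (faceF J)) \<le> 2 ^ card J
      \<and> (card (face_family \<tau> (faceF J)) = 2 ^ card J \<longleftrightarrow> perfect_family \<tau> J)"
proof -
  interpret rfp \<omega> \<tau> by unfold_locales (rule assms(1))
  show ?thesis
    using fam_finite[OF assms(2,3)] fam_card[OF assms(2,3)] by (simp add: perfect_family_def)
qed

end
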